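(* Let $H\le G$ be finite groups and $\Sigma$ a group of automorphisms of $G$. If the set $\{(\sigma,g)\in\Sigma\times H:\sigma(g)=g\}$ is $4$-large in the direct product group $\Sigma\times H$, then $\sigma(g)=g$ for all $\sigma\in\Sigma$ and $g\in H$.
   Context: A subset $X$ of a group $K$ is $4$-large in $K$ if the intersection of any $4$ left translates $a_1X\cap a_2X\cap a_3X\cap a_4X$ ($a_i\in K$) is non-empty. *)

theory Defs
  imports "HOL-Algebra.Algebra"
begin

definition large :: "('a, 'b) monoid_scheme \<Rightarrow> nat \<Rightarrow> 'a set \<Rightarrow> bool" where
  "large K k A \<longleftrightarrow>
     (\<forall>a. (\<forall>i<k. a i \<in> carrier K) \<longrightarrow> (\<Inter>i<k. a i <#\<^bsub>K\<^esub> A) \<noteq> {})"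

end

theory Submission
  imports Defs
begin

lemma autogroup_mult_apply:
  assumes "a \<in> auto G" "b \<in> auto G" "x \<in> carrier G"
  shows "(a \<otimes>\<^bsub>AutoGroup G\<^esub> b) x = a (b x)"
  using assms by (simp add: AutoGroup_def BijGroup_def auto_def compose_def)

lemma autogroup_one: "\<one>\<^bsub>AutoGroup G\<^esub> = (\<lambda>x\<in>carrier G. x)"
  by (simp add: AutoGroup_def BijGroup_def)

lemma auto_hom_inv:
  assumes "group G" "a \<in> auto G" "x \<in> carrier G"
  shows "a (inv\<^bsub>G\<^esub> x) = inv\<^bsub>G\<^esub> (a x)"
proof -
  have "group_hom G G a" using assms
    by (simp add: group_hom_def group_hom_axioms_def auto_def)
  then show ?thesis using assms(3) by (simp add: group_hom.hom_inv)
qed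

theorem theorem7p2:
  fixes G :: "('a, 'b) monoid_scheme" and H :: "'a set"
    and \<Sigma> :: "('a \<Rightarrow> 'a) set"
  assumes "group G" and "finite (carrier G)"
    and "subgroup H G"
    and "subgroup \<Sigma> (AutoGroup G)"
    and "large ((AutoGroup G)\<lparr>carrier := \<Sigma>\<rparr> \<times>\<times> G\<lparr>carrier := H\<rparr>) 4
           {(\<sigma>, g) \<in> \<Sigma> \<times> H. \<sigma> g = g}"
  shows "\<forall>\<sigma> \<in> \<Sigma>. \<forall>g \<in> H. \<sigma> g = g"
proof (intro ballI)
  fix \<sigma> g assume s: "\<sigma> \<in> \<Sigma>" and g: "g \<in> H"
  interpret G: group G by fact
  let ?AG = "AutoGroup G"
  let ?K = "(AutoGroup G)\<lparr>carrier := \<Sigma>\<rparr> \<times>\<times> G\<lparr>carrier := H\<rparr>"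
  let ?X = "{(\<sigma>, g) \<in> \<Sigma> \<times> H. \<sigma> g = g}"
  let ?e = "\<one>\<^bsub>?AG\<^esub>"
  have Sa: "\<Sigma> \<subseteq> auto G" using assms(4) subgroup.subset by (fastforce simp: AutoGroup_def)
  have HG: "H \<subseteq> carrier G" using assms(3) subgroup.subset by blast
  have e: "?e \<in> \<Sigma>" using assms(4) subgroup.one_closed by blast
  have one: "\<one>\<^bsub>G\<^esub> \<in> H" using assms(3) subgroup.one_closed by blast
  define a where "a = (\<lambda>i::nat. if i = 0 then (?e, \<one>\<^bsub>G\<^esub>) else if i = 1 then (\<sigma>, \<one>\<^bsub>G\<^esub>)
       else if i = 2 then (?e, g) else (\<sigma>, g))"
  have "\<forall>i<4. a i \<in> carrier ?K" using e one s g by (simp add: a_def DirProd_def)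
  then have "(\<Inter>i<4. a i <#\<^bsub>?K\<^esub> ?X) \<noteq> {}" using assms(5) unfolding large_def by blast
  then obtain \<alpha> x where p: "\<And>i. i < 4 \<Longrightarrow> (\<alpha>, x) \<in> a i <#\<^bsub>?K\<^esub> ?X" by fast
  have mem: "\<exists>\<tau> y. \<tau> \<in> \<Sigma> \<and> y \<in> H \<and> \<tau> y = y \<and> \<alpha> = fst (a i) \<otimes>\<^bsub>?AG\<^esub> \<tau> \<and> x = snd (a i) \<otimes>\<^bsub>G\<^esub> y"
    if "i < 4" for i
    using p[OF that] by (cases "a i") (auto simp: l_coset_def DirProd_def)
  obtain \<tau>1 y1 where 1: "\<tau>1 \<in> \<Sigma>" "y1 \<in> H" "\<tau>1 y1 = y1" "\<alpha> = ?e \<otimes>\<^bsub>?AG\<^esub> \<tau>1" "x = \<one>\<^bsub>G\<^esub> \<otimes>\<^bsub>G\<^esub> y1"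
    using mem[of 0] by (auto simp: a_def)
  obtain \<tau>2 y2 where 2: "\<tau>2 \<in> \<Sigma>" "y2 \<in> H" "\<tau>2 y2 = y2" "\<alpha> = \<sigma> \<otimes>\<^bsub>?AG\<^esub> \<tau>2" "x = \<one>\<^bsub>G\<^esub> \<otimes>\<^bsub>G\<^esub> y2"
    using mem[of 1] by (auto simp: a_def)
  obtain \<tau>3 y3 where 3: "\<tau>3 \<in> \<Sigma>" "y3 \<in> H" "\<tau>3 y3 = y3" "\<alpha> = ?e \<otimes>\<^bsub>?AG\<^esub> \<tau>3" "x = g \<otimes>\<^bsub>G\<^esub> y3"
    using mem[of 2] by (auto simp: a_def)
  obtain \<tau>4 y4 where 4: "\<tau>4 \<in> \<Sigma>" "y4 \<in> H" "\<tau>4 y4 = y4" "\<alpha> = \<sigma> \<otimes>\<^bsub>?AG\<^esub> \<tau>4" "x = g \<otimes>\<^bsub>G\<^esub> y4"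
    using mem[of 3] by (auto simp: a_def)
  have gc: "g \<in> carrier G" using g HG by blast
  have sa: "\<sigma> \<in> auto G" using s Sa by blast
  have ea: "?e \<in> auto G" using e Sa by blast
  have y1c: "y1 \<in> carrier G" "y2 \<in> carrier G" "y3 \<in> carrier G" "y4 \<in> carrier G"
    using 1 2 3 4 HG by auto
  have xc: "x \<in> carrier G" using 1 y1c by simp
  have hom: "\<And>u v. u \<in> carrier G \<Longrightarrow> v \<in> carrier G \<Longrightarrow> t (u \<otimes>\<^bsub>G\<^esub> v) = t u \<otimes>\<^bsub>G\<^esub> t v"
    and car: "\<And>u. u \<in> carrier G \<Longrightarrow> t u \<in> carrier G"
    if "t \<in> auto G" for t
    using that by (auto simp: auto_def hom_def)
  have appl: "\<And>z. z \<in> carrier G \<Longrightarrow> (?e \<otimes>\<^bsub>?AG\<^esub> t) z = t z" if "t \<in> \<Sigma>" for t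
    using autogroup_mult_apply[OF ea, of t] that Sa car[of t] by (auto simp: autogroup_one)
  have appl2: "\<And>z. z \<in> carrier G \<Longrightarrow> (\<sigma> \<otimes>\<^bsub>?AG\<^esub> t) z = \<sigma> (t z)" if "t \<in> \<Sigma>" for t
    using autogroup_mult_apply[OF sa, of t] that Sa by auto
  have aS: "\<alpha> \<in> \<Sigma>" using 1(4) e 1(1) assms(4) subgroup.m_closed by fastforce
  have aa: "\<alpha> \<in> auto G" using aS Sa by blast
  have x1: "x = y1" "x = y2" using 1 2 y1c by auto
  have ax: "\<alpha> x = x" using 1 appl[OF 1(1)] x1 y1c by simp
  have sx: "\<sigma> x = x" using ax 2 appl2[OF 2(1)] x1 y1c by simp
  have ag: "\<alpha> g = g"
  proof -
    have "\<alpha> y3 = y3" using 3 appl[OF 3(1)] y1c by simp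
    then have "\<alpha> g \<otimes>\<^bsub>G\<^esub> y3 = g \<otimes>\<^bsub>G\<^esub> y3"
      using ax 3(5) hom[OF aa] gc y1c by simp
    then show ?thesis using G.r_cancel car[OF aa] gc y1c by blast
  qed
  have ay4: "\<alpha> y4 = y4"
  proof -
    have "g \<otimes>\<^bsub>G\<^esub> \<alpha> y4 = g \<otimes>\<^bsub>G\<^esub> y4"
      using ax ag 4(5) hom[OF aa] gc y1c by simp
    then show ?thesis using G.l_cancel car[OF aa] gc y1c by blast
  qed
  have sy4: "\<sigma> y4 = y4" using ay4 4 appl2[OF 4(1)] y1c by simp
  have "\<sigma> g \<otimes>\<^bsub>G\<^esub> y4 = g \<otimes>\<^bsub>G\<^esub> y4"
    using sx sy4 4(5) hom[OF sa] gc y1c by simp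
  then show "\<sigma> g = g" using G.r_cancel car[OF sa] gc y1c by blast
qed

end
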